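(* Let $q=p^s$ with $p$ prime, $R_T=\mathbb{F}_q[T]$, $P\in R_T$ monic irreducible of degree $d$, and $n,\alpha\in\mathbb{N}$ with $n\ge1$. Let $v_n(\alpha)$ be the number of distinct cyclic subgroups of order $p^n$ of the group $(R_T/(P^{\alpha}))^{\ast}$. Then \[ v_n(\alpha)=\frac{q^{d\left(\alpha-\lceil \alpha/p^n\rceil\right)}-q^{d\left(\alpha-\lceil\alpha/p^{n-1}\rceil\right)}}{p^{n-1}(p-1)} =\frac{q^{d\left(\alpha-\lceil\alpha/p^{n-1}\rceil\right)}\left(q^{d\left(\lceil\alpha/p^{n-1}\rceil-\lceil\alpha/p^{n}\rceil\right)}-1\right)}{p^{n-1}(p-1)}, \] where $\lceil x\rceil$ is the least integer $\geq x$. *)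

theory Defs
  imports "HOL-Algebra.Generated_Groups" "HOL-Computational_Algebra.Polynomial"
    "HOL-Computational_Algebra.Polynomial_Factorial"
begin

text \<open>Multiplicative monoid of the quotient ring F_q[T]/(M): residues are the reduced
  representatives f with f mod M = f; operations are reduced mod M.\<close>
definition quot_poly_ring :: "'a::field poly \<Rightarrow> 'a poly monoid" where
  "quot_poly_ring M =
     \<lparr>carrier = {f. f mod M = f},
      monoid.mult = (\<lambda>f g. (f * g) mod M),
      one = 1 mod M\<rparr>"

definition quot_units :: "'a::field poly \<Rightarrow> 'a poly monoid" where
  "quot_units M = units_of (quot_poly_ring M)"

definition num_cyclic_subgroups :: "('b, 'c) monoid_scheme \<Rightarrow> nat \<Rightarrow> nat" where
  "num_cyclic_subgroups G k =
     card {H. (\<exists>x\<in>carrier G. H = generate G {x}) \<and> card H = k}"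

end

theory Submission imports Defs "HOL-Algebra.Multiplicative_Group" "HOL-Number_Theory.Residues"
begin


lemma (in group) fiber_card:
  assumes fin: "finite (carrier G)" and x: "x \<in> carrier G" and ox: "ord x = k"
  shows "card {y \<in> generate G {x}. ord y = k} = totient k"
proof -
  have k1: "k \<ge> 1" using ord_ge_1[OF fin x] ox by simp
  have gen: "generate G {x} = {x [^] i | i. i \<in> (UNIV :: nat set)}"
    using generate_pow_on_finite_carrier[OF fin x] .
  have eq: "{y \<in> generate G {x}. ord y = k} = (\<lambda>i::nat. x [^] i) ` totatives k"
  proof (intro equalityI subsetI)
    fix y assume "y \<in> {y \<in> generate G {x}. ord y = k}"
    then obtain i :: nat where y: "y = x [^] i" and oy: "ord y = k" using gen by auto
    define j where "j = i mod k"
    have "x [^] i = x [^] (k * (i div k) + j)" by (simp add: j_def)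
    also have "\<dots> = (x [^] k) [^] (i div k) \<otimes> x [^] j" using x by (simp add: nat_pow_mult nat_pow_pow)
    also have "\<dots> = x [^] j" using x by (simp add: ox[symmetric])
    finally have yj: "y = x [^] j" using y by simp
    have jk: "j < k" using k1 by (simp add: j_def)
    show "y \<in> (\<lambda>i. x [^] i) ` totatives k"
    proof (cases "j = 0")
      case True
      then have "y = \<one>" using yj by simp
      then have "k = 1" using oy by simp
      moreover have "x [^] k = \<one>" using x by (simp add: ox[symmetric])
      ultimately have "y = x [^] (1::nat)" using \<open>y = \<one>\<close> by simp
      moreover have "(1::nat) \<in> totatives k" using \<open>k = 1\<close> by (simp add: totatives_def)
      ultimately show ?thesis by blast
    next
      case False
      have "coprime j k" using pow_ord_eq_ord_iff[OF fin x, of j] oy yj ox by simp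
      then show ?thesis using False jk yj by (auto simp: totatives_def)
    qed
  next
    fix y assume "y \<in> (\<lambda>i. x [^] i) ` totatives k"
    then obtain i where i: "i \<in> totatives k" and y: "y = x [^] i" by auto
    have "ord y = k" using pow_ord_eq_ord_iff[OF fin x, of i] i y ox by (simp add: totatives_def)
    moreover have "y \<in> generate G {x}" using gen y by auto
    ultimately show "y \<in> {y \<in> generate G {x}. ord y = k}" by simp
  qed
  have "inj_on (\<lambda>i::nat. x [^] i) (totatives k)" 
    using ord_inj'[OF x] ox by (rule_tac inj_on_subset) (auto simp: totatives_def)
  then show ?thesis unfolding eq totient_def by (simp add: card_image)
qed

lemma (in group) count_cyclic:
  assumes fin: "finite (carrier G)" and k: "k > 0"
  shows "card {x \<in> carrier G. ord x = k} = totient k * num_cyclic_subgroups G k"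
proof -
  define S where "S = {H. (\<exists>x\<in>carrier G. H = generate G {x}) \<and> card H = k}"
  define F where "F H = {y \<in> H. ord y = k}" for H
  have sub: "generate G {x} \<subseteq> carrier G" if "x \<in> carrier G" for x
    using generate_incl that by auto
  have finS: "finite S"
    by (rule finite_subset[of _ "Pow (carrier G)"]) (use fin sub in \<open>auto simp: S_def\<close>)
  have genord: "card (generate G {y}) = ord y" if "y \<in> carrier G" for y
    using generate_pow_card[OF that] by simp
  have same: "generate G {y} = H" if "H \<in> S" "y \<in> H" "ord y = k" for H y
  proof -
    from that(1) obtain x where x: "x \<in> carrier G" "H = generate G {x}" "card H = k" by (auto simp: S_def)
    have yc: "y \<in> carrier G" using sub x that by auto
    have "generate G {y} \<subseteq> H"
      using generate_subgroup_incl[of "{y}" H] generate_is_subgroup[of "{x}"] x that by auto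
    moreover have "finite H" using x sub fin finite_subset by metis
    ultimately show ?thesis using card_subset_eq genord[OF yc] that x by metis
  qed
  have U: "{x \<in> carrier G. ord x = k} = (\<Union>H\<in>S. F H)"
  proof (intro equalityI subsetI)
    fix y assume y: "y \<in> {x \<in> carrier G. ord x = k}"
    then have "generate G {y} \<in> S" using genord S_def by auto
    moreover have "y \<in> F (generate G {y})" using y generate.incl[of y "{y}" G] F_def by auto
    ultimately show "y \<in> (\<Union>H\<in>S. F H)" by blast
  next
    fix y assume "y \<in> (\<Union>H\<in>S. F H)"
    then show "y \<in> {x \<in> carrier G. ord x = k}" using sub S_def F_def by auto
  qed
  have "card (\<Union>H\<in>S. F H) = (\<Sum>H\<in>S. card (F H))"
  proof (rule card_UN_disjoint[OF finS])
    show "\<forall>H\<in>S. finite (F H)" using sub fin finite_subset S_def F_def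
      by (smt (verit) mem_Collect_eq subsetI)
    show "\<forall>H\<in>S. \<forall>H'\<in>S. H \<noteq> H' \<longrightarrow> F H \<inter> F H' = {}"
      using same F_def by blast
  qed
  also have "\<dots> = (\<Sum>H\<in>S. totient k)"
  proof (rule sum.cong[OF refl])
    fix H assume "H \<in> S"
    then obtain x where x: "x \<in> carrier G" "H = generate G {x}" "card H = k" using S_def by auto
    then show "card (F H) = totient k" using fiber_card[OF fin x(1)] genord[OF x(1)] F_def by simp
  qed
  finally show ?thesis using U unfolding num_cyclic_subgroups_def S_def by simp
qed



definition Bset :: "nat \<Rightarrow> 'a::zero poly set" where
  "Bset m = {f. \<forall>i\<ge>m. Polynomial.coeff f i = 0}"

lemma Bset_iff: "f \<in> Bset m \<longleftrightarrow> f = 0 \<or> degree f < m"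
proof
  assume "f \<in> Bset m"
  then have h: "\<forall>i\<ge>m. Polynomial.coeff f i = 0" by (simp add: Bset_def)
  show "f = 0 \<or> degree f < m"
  proof (rule ccontr)
    assume "\<not> (f = 0 \<or> degree f < m)"
    then have "f \<noteq> 0" "degree f \<ge> m" by auto
    then show False using h leading_coeff_0_iff by blast
  qed
next
  assume "f = 0 \<or> degree f < m"
  then show "f \<in> Bset m" by (auto simp: Bset_def coeff_eq_0)
qed

lemma Bset_Suc: "Bset (Suc m) = (\<lambda>(a, f). pCons a f) ` (UNIV \<times> Bset m)"
proof (intro equalityI subsetI)
  fix g :: "'a poly" assume g: "g \<in> Bset (Suc m)"
  obtain a f where gf: "g = pCons a f" by (cases g) auto
  have "f \<in> Bset m" unfolding Bset_def
  proof (intro CollectI allI impI)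
    fix i assume "m \<le> i"
    then have "Polynomial.coeff g (Suc i) = 0" using g by (simp add: Bset_def)
    then show "Polynomial.coeff f i = 0" using gf by simp
  qed
  then show "g \<in> (\<lambda>(a, f). pCons a f) ` (UNIV \<times> Bset m)" using gf by auto
next
  fix g :: "'a poly" assume "g \<in> (\<lambda>(a, f). pCons a f) ` (UNIV \<times> Bset m)"
  then obtain a f where gf: "g = pCons a f" and f: "f \<in> Bset m" by auto
  show "g \<in> Bset (Suc m)" unfolding Bset_def gf
  proof (intro CollectI allI impI)
    fix i assume "Suc m \<le> i"
    then obtain j where "i = Suc j" "j \<ge> m" by (cases i) auto
    then show "Polynomial.coeff (pCons a f) i = 0" using f by (simp add: Bset_def)
  qed
qed

lemma Bset_card: "card (Bset m :: 'a::{zero,finite} poly set) = card (UNIV :: 'a set) ^ m \<and> finite (Bset m :: 'a poly set)"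
proof (induction m)
  case 0
  have "Bset 0 = {0 :: 'a poly}" by (auto simp: Bset_iff)
  then show ?case by simp
next
  case (Suc m)
  have inj: "inj_on (\<lambda>(a, f). pCons a f) (UNIV \<times> (Bset m :: 'a poly set))"
    by (auto simp: inj_on_def)
  show ?case unfolding Bset_Suc using Suc inj
    by (simp add: card_image card_cartesian_product)
qed

lemma quot_monoid: "monoid (quot_poly_ring (M :: 'a::field poly))"
  by (unfold_locales) (auto simp: quot_poly_ring_def mod_mult_left_eq mod_mult_right_eq mult.assoc)

lemma quot_pow: "x [^]\<^bsub>quot_poly_ring M\<^esub> (n::nat) = x ^ n mod (M :: 'a::field poly)"
  by (induction n) (auto simp: quot_poly_ring_def mod_mult_left_eq mod_mult_right_eq mult.commute)

lemma units_char:
  fixes M :: "'a::field poly"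
  assumes "degree M > 0" "m > 0"
  shows "{x \<in> carrier (quot_units M). x [^]\<^bsub>quot_units M\<^esub> m = \<one>\<^bsub>quot_units M\<^esub>}
        = {x. x mod M = x \<and> x ^ m mod M = 1}"
proof -
  interpret R: monoid "quot_poly_ring M" by (rule quot_monoid)
  have one: "1 mod M = 1" using assms by (simp add: mod_poly_less)
  show ?thesis
  proof (intro equalityI subsetI)
    fix x assume "x \<in> {x \<in> carrier (quot_units M). x [^]\<^bsub>quot_units M\<^esub> m = \<one>\<^bsub>quot_units M\<^esub>}"
    then have x: "x \<in> Units (quot_poly_ring M)" "x [^]\<^bsub>quot_units M\<^esub> m = \<one>\<^bsub>quot_units M\<^esub>"
      by (auto simp: quot_units_def units_of_carrier)
    then have "x [^]\<^bsub>quot_poly_ring M\<^esub> m = \<one>\<^bsub>quot_poly_ring M\<^esub>"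
      by (simp add: quot_units_def R.units_of_pow units_of_one)
    then have "x ^ m mod M = \<one>\<^bsub>quot_poly_ring M\<^esub>" by (simp only: quot_pow)
    then have "x ^ m mod M = 1" by (simp add: quot_poly_ring_def one)
    moreover have "x mod M = x" using x(1) by (auto simp: Units_def quot_poly_ring_def)
    ultimately show "x \<in> {x. x mod M = x \<and> x ^ m mod M = 1}" by simp
  next
    fix x assume "x \<in> {x. x mod M = x \<and> x ^ m mod M = 1}"
    then have x: "x mod M = x" "x ^ m mod M = 1" by auto
    define y where "y = x ^ (m - 1) mod M"
    have xm: "x * x ^ (m - 1) = x ^ m" using assms(2) by (simp add: power_eq_if)
    have "x \<in> Units (quot_poly_ring M)"
      unfolding Units_def
    proof (intro CollectI conjI bexI)
      show "x \<in> carrier (quot_poly_ring M)" using x by (simp add: quot_poly_ring_def)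
      show "y \<in> carrier (quot_poly_ring M)" by (simp add: quot_poly_ring_def y_def)
      show "y \<otimes>\<^bsub>quot_poly_ring M\<^esub> x = \<one>\<^bsub>quot_poly_ring M\<^esub>"
      proof -
        have "(x ^ (m - 1) mod M) * x mod M = x ^ (m - 1) * x mod M" by (rule mod_mult_left_eq)
        then show ?thesis using x xm by (simp add: quot_poly_ring_def y_def one mult.commute)
      qed
      show "x \<otimes>\<^bsub>quot_poly_ring M\<^esub> y = \<one>\<^bsub>quot_poly_ring M\<^esub>"
      proof -
        have "x * (x ^ (m - 1) mod M) mod M = x * x ^ (m - 1) mod M" by (rule mod_mult_right_eq)
        then show ?thesis using x xm by (simp add: quot_poly_ring_def y_def one)
      qed
    qed
    moreover have "x [^]\<^bsub>quot_poly_ring M\<^esub> m = \<one>\<^bsub>quot_poly_ring M\<^esub>"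
      unfolding quot_pow using x by (simp add: quot_poly_ring_def one)
    ultimately show "x \<in> {x \<in> carrier (quot_units M). x [^]\<^bsub>quot_units M\<^esub> m = \<one>\<^bsub>quot_units M\<^esub>}"
      by (simp add: quot_units_def R.units_of_pow units_of_one units_of_carrier)
  qed
qed



lemma ceil_le_iff_nat:
  assumes "m > 0"
  shows "(\<alpha>::nat) \<le> m * k \<longleftrightarrow> nat \<lceil>real \<alpha> / real m\<rceil> \<le> k"
proof -
  have "nat \<lceil>real \<alpha> / real m\<rceil> \<le> k \<longleftrightarrow> \<lceil>real \<alpha> / real m\<rceil> \<le> int k" by linarith
  also have "\<dots> \<longleftrightarrow> real \<alpha> / real m \<le> real k" by (simp add: ceiling_le_iff)
  also have "\<dots> \<longleftrightarrow> real \<alpha> \<le> real m * real k" using assms by (simp add: pos_divide_le_eq mult.commute)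
  also have "\<dots> \<longleftrightarrow> \<alpha> \<le> m * k" by (metis of_nat_le_iff of_nat_mult)
  finally show ?thesis by simp
qed

lemma dvd_pow_iff:
  fixes P g :: "'a::idom"
  assumes P: "prime_elem P" and m: "m > 0"
  shows "P ^ \<alpha> dvd g ^ m \<longleftrightarrow> P ^ (nat \<lceil>real \<alpha> / real m\<rceil>) dvd g"
proof
  define c where "c = nat \<lceil>real \<alpha> / real m\<rceil>"
  assume "P ^ c dvd g"
  then have "(P ^ c) ^ m dvd g ^ m" by (rule dvd_power_same)
  moreover have "\<alpha> \<le> c * m" using ceil_le_iff_nat[OF m, of \<alpha> c] by (simp add: c_def mult.commute)
  then have "P ^ \<alpha> dvd (P ^ c) ^ m" by (simp add: le_imp_power_dvd flip: power_mult)
  ultimately show "P ^ \<alpha> dvd g ^ m" using dvd_trans by blast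
next
  define c where "c = nat \<lceil>real \<alpha> / real m\<rceil>"
  assume A: "P ^ \<alpha> dvd g ^ m"
  show "P ^ c dvd g"
  proof (rule ccontr)
    assume nd: "\<not> P ^ c dvd g"
    define n where "n = (LEAST n. \<not> P ^ n dvd g)"
    have nn: "\<not> P ^ n dvd g" unfolding n_def by (rule LeastI[of _ c]) (rule nd)
    have nc: "n \<le> c" unfolding n_def by (rule Least_le) (rule nd)
    have n0: "n > 0" using nn by (cases n) auto
    define k where "k = n - 1"
    have kn: "n = Suc k" using n0 by (simp add: k_def)
    have "P ^ k dvd g" using not_less_Least[of k "\<lambda>n. \<not> P ^ n dvd g"] kn n_def by auto
    then obtain h where gh: "g = P ^ k * h" by blast
    have Ph: "\<not> P dvd h"
    proof
      assume "P dvd h"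
      then have "P ^ Suc k dvd g" using gh by (simp add: mult_dvd_mono)
      then show False using nn kn by simp
    qed
    have e: "\<alpha> \<le> m * k \<longleftrightarrow> c \<le> k" using ceil_le_iff_nat[OF m, of \<alpha> k] unfolding c_def by blast
    have "\<not> c \<le> k" using nc kn by simp
    then have km: "\<not> \<alpha> \<le> m * k" using e by blast
    then have "Suc (k * m) \<le> \<alpha>" by (simp add: mult.commute)
    then have "P ^ Suc (k * m) dvd g ^ m" using A le_imp_power_dvd dvd_trans by blast
    also have "g ^ m = P ^ (k * m) * h ^ m" using gh by (simp add: power_mult_distrib power_mult)
    finally have "P ^ (k * m) * P dvd P ^ (k * m) * h ^ m" by (simp add: mult.commute)
    moreover have "P \<noteq> 0" using P not_prime_elem_zero by blast
    then have "P ^ (k * m) \<noteq> 0" by simp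
    ultimately have "P dvd h ^ m" using dvd_mult_cancel_left[of "P ^ (k * m)" P "h ^ m"] by blast
    then have "P dvd h" using P prime_elem_dvd_power by blast
    then show False using Ph by simp
  qed
qed

lemma frob:
  fixes x :: "'a::field poly"
  assumes "prime (CHAR('a))" 
  shows "x ^ (CHAR('a) ^ j) - 1 = (x - 1) ^ (CHAR('a) ^ j)"
proof -
  have "prime (CHAR('a poly))" using assms by simp
  then have "((x - 1) + 1) ^ (CHAR('a) ^ j) = (x - 1) ^ (CHAR('a) ^ j) + 1 ^ (CHAR('a) ^ j)"
    by (rule freshmans_dream'[where n=j]) simp_all
  then show ?thesis by simp
qed

lemma count_set:
  fixes P :: "'a::{field,finite} poly"
  assumes P0: "P \<noteq> 0" and cle: "c \<le> \<alpha>" and dpos: "degree P > 0" and a1: "\<alpha> \<ge> 1"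
  shows "card {x. x mod (P ^ \<alpha>) = x \<and> P ^ c dvd x - 1} = card (UNIV :: 'a set) ^ (degree P * (\<alpha> - c))"
proof -
  define M where "M = P ^ \<alpha>"
  define d where "d = degree P"
  have dM: "degree M = d * \<alpha>" by (simp add: M_def d_def degree_power_eq P0)
  have dM0: "degree M > 0" using dM a1 dpos d_def by simp
  have dPc: "degree (P ^ c) = d * c" by (simp add: d_def degree_power_eq P0)
  have Pc0: "P ^ c \<noteq> 0" using P0 by simp
  have modiff: "x mod M = x \<longleftrightarrow> x = 0 \<or> degree x < degree M" for x
  proof
    assume h: "x mod M = x" show "x = 0 \<or> degree x < degree M"
    proof (cases "x = 0")
      case False
      have "M \<noteq> 0" using dM0 by auto
      moreover have "\<not> M dvd x" using h False by (simp add: dvd_eq_mod_eq_0)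
      ultimately have "degree (x mod M) < degree M" by (rule degree_mod_less_degree)
      then show ?thesis using h by simp
    qed simp
  next
    assume "x = 0 \<or> degree x < degree M" then show "x mod M = x" by (auto simp: mod_poly_less)
  qed
  have eq: "{x. x mod M = x \<and> P ^ c dvd x - 1} = (\<lambda>h. 1 + P ^ c * h) ` Bset (d * \<alpha> - d * c)"
  proof (intro equalityI subsetI)
    fix x assume "x \<in> {x. x mod M = x \<and> P ^ c dvd x - 1}"
    then have x: "x = 0 \<or> degree x < d * \<alpha>" "P ^ c dvd x - 1" using modiff dM by auto
    then obtain h where h: "x - 1 = P ^ c * h" by blast
    have "h \<in> Bset (d * \<alpha> - d * c)"
    proof (cases "h = 0")
      case False
      have "degree (x - 1) = d * c + degree h" using h False Pc0 dPc by (simp add: degree_mult_eq)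
      moreover have "degree (x - 1) < d * \<alpha>"
      proof (cases "x = 0")
        case True then show ?thesis using dM dM0 by simp
      next
        case False then have "degree x < d * \<alpha>" using x(1) by simp
        then show ?thesis using degree_diff_less[of x "d * \<alpha>" 1] dM dM0 by simp
      qed
      ultimately show ?thesis unfolding Bset_iff by arith
    qed (simp add: Bset_iff)
    moreover have "x = 1 + P ^ c * h" using h by (simp add: algebra_simps)
    ultimately show "x \<in> (\<lambda>h. 1 + P ^ c * h) ` Bset (d * \<alpha> - d * c)" by blast
  next
    fix x assume "x \<in> (\<lambda>h. 1 + P ^ c * h) ` Bset (d * \<alpha> - d * c)"
    then obtain h where h: "h \<in> Bset (d * \<alpha> - d * c)" and xh: "x = 1 + P ^ c * h" by auto
    have "degree x < degree M"
    proof (cases "h = 0")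
      case True then show ?thesis using xh dM0 by simp
    next
      case False
      then have "degree h < d * \<alpha> - d * c" using h by (simp add: Bset_iff)
      then have "degree (P ^ c * h) < d * \<alpha>" using False Pc0 dPc by (simp add: degree_mult_eq)
      then show ?thesis using xh dM degree_add_less[of 1 "degree M" "P ^ c * h"] dM0 by auto
    qed
    then show "x \<in> {x. x mod M = x \<and> P ^ c dvd x - 1}" using modiff xh by simp
  qed
  have inj: "inj_on (\<lambda>h. 1 + P ^ c * h) (Bset (d * \<alpha> - d * c))"
    using Pc0 by (auto simp: inj_on_def)
  have "card {x. x mod M = x \<and> P ^ c dvd x - 1} = card (UNIV :: 'a set) ^ (d * \<alpha> - d * c)"
    unfolding eq using card_image[OF inj] Bset_card[where 'a='a and m="d * \<alpha> - d * c"] by simp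
  then show ?thesis by (simp add: M_def d_def diff_mult_distrib2)
qed



lemma modiff:
  fixes M x :: "'a::field poly"
  assumes "M \<noteq> 0"
  shows "x mod M = x \<longleftrightarrow> x = 0 \<or> degree x < degree M"
proof
  assume h: "x mod M = x" show "x = 0 \<or> degree x < degree M"
  proof (cases "x = 0")
    case False
    have "\<not> M dvd x" using h False by (simp add: dvd_eq_mod_eq_0)
    with assms have "degree (x mod M) < degree M" by (rule degree_mod_less_degree)
    then show ?thesis using h by simp
  qed simp
next
  assume "x = 0 \<or> degree x < degree M" then show "x mod M = x" by (auto simp: mod_poly_less)
qed

lemma char_eq:
  assumes "prime p" "card (UNIV :: 'a::{field,finite} set) = p ^ s"
  shows "CHAR('a) = p"
proof -
  have "CHAR('a) > 0" by (rule finite_imp_CHAR_pos) simp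
  then have pc: "prime CHAR('a)" by (rule prime_CHAR_semidom)
  have "CHAR('a) dvd p ^ s" using CHAR_dvd_CARD[where 'a='a] assms(2) by simp
  then have "CHAR('a) dvd p" using pc prime_dvd_power by blast
  then show ?thesis using pc assms(1) primes_dvd_imp_eq by blast
qed

lemma ord_primepow:
  assumes p: "prime (p::nat)" and n: "n \<ge> 1"
  shows "(a dvd p ^ n \<and> \<not> a dvd p ^ (n - 1)) \<longleftrightarrow> a = p ^ n"
proof
  assume A: "a dvd p ^ n \<and> \<not> a dvd p ^ (n - 1)"
  then obtain i where i: "i \<le> n" "a = p ^ i" using divides_primepow_nat[OF p] by blast
  have "\<not> i \<le> n - 1" using A i le_imp_power_dvd by blast
  then have "i = n" using i by linarith
  then show "a = p ^ n" using i by simp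
next
  assume a: "a = p ^ n"
  have p1: "p > 1" using p prime_gt_1_nat by blast
  have "p ^ (n - 1) < p ^ n" using n p1 by (intro power_strict_increasing) auto
  then have "\<not> p ^ n dvd p ^ (n - 1)" using p1 by (auto dest: dvd_imp_le)
  then show "a dvd p ^ n \<and> \<not> a dvd p ^ (n - 1)" using a by simp
qed



lemma count_X:
  fixes P :: "'a::{field,finite} poly" and p j \<alpha> :: nat
  assumes p: "prime p" and ch: "CHAR('a) = p"
    and irr: "irreducible P" and a1: "\<alpha> \<ge> 1"
  shows "card {x \<in> carrier (quot_units (P ^ \<alpha>)). x [^]\<^bsub>quot_units (P ^ \<alpha>)\<^esub> (p ^ j) = \<one>\<^bsub>quot_units (P ^ \<alpha>)\<^esub>}
         = card (UNIV :: 'a set) ^ (degree P * (\<alpha> - nat \<lceil>real \<alpha> / real (p ^ j)\<rceil>))"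
proof -
  define M where "M = P ^ \<alpha>"
  define c where "c = nat \<lceil>real \<alpha> / real (p ^ j)\<rceil>"
  have P: "prime_elem P" using irr by (rule field_poly_irreducible_imp_prime)
  have P0: "P \<noteq> 0" using P by auto
  have dP: "degree P > 0"
  proof (rule ccontr)
    assume "\<not> degree P > 0"
    then have "is_unit P" using P0 by (simp add: is_unit_iff_degree)
    then show False using P prime_elem_not_unit by blast
  qed
  have M0: "M \<noteq> 0" using P0 by (simp add: M_def)
  have dM: "degree M > 0" using dP a1 P0 by (simp add: M_def degree_power_eq)
  have one: "1 mod M = 1" using dM by (simp add: mod_poly_less)
  have pj: "p ^ j > 0" using p prime_gt_0_nat by simp
  have cle: "c \<le> \<alpha>" using ceil_le_iff_nat[OF pj, of \<alpha> \<alpha>] pj unfolding c_def by simp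
  have "{x \<in> carrier (quot_units M). x [^]\<^bsub>quot_units M\<^esub> (p ^ j) = \<one>\<^bsub>quot_units M\<^esub>}
        = {x. x mod M = x \<and> x ^ (p ^ j) mod M = 1}" by (rule units_char[OF dM pj])
  also have "\<dots> = {x. x mod (P ^ \<alpha>) = x \<and> P ^ c dvd x - 1}"
  proof -
    have "x ^ (p ^ j) mod M = 1 \<longleftrightarrow> P ^ c dvd x - 1" for x
    proof -
      have "x ^ (p ^ j) mod M = 1 \<longleftrightarrow> x ^ (p ^ j) mod M = 1 mod M" using one by simp
      also have "\<dots> \<longleftrightarrow> M dvd x ^ (p ^ j) - 1" by (rule mod_eq_dvd_iff)
      also have "x ^ (p ^ j) - 1 = (x - 1) ^ (p ^ j)" using frob[of x j] ch p by simp
      also have "M dvd (x - 1) ^ (p ^ j) \<longleftrightarrow> P ^ c dvd x - 1"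
        unfolding M_def c_def by (rule dvd_pow_iff[OF P pj])
      finally show ?thesis .
    qed
    then show ?thesis by (simp add: M_def)
  qed
  also have "card \<dots> = card (UNIV :: 'a set) ^ (degree P * (\<alpha> - c))"
    by (rule count_set[OF P0 cle dP a1])
  finally show ?thesis by (simp add: M_def c_def)
qed



theorem proposition5p1:
  fixes P :: "'a::{field,finite} poly" and p s q d n \<alpha> :: nat
  assumes "prime p"
    and "q = p ^ s"
    and "card (UNIV :: 'a set) = q"
    and "irreducible P" and "lead_coeff P = 1" and "degree P = d"
    and "n \<ge> 1"
  shows "real (num_cyclic_subgroups (quot_units (P ^ \<alpha>)) (p ^ n)) =
           (real q ^ (d * (\<alpha> - nat \<lceil>real \<alpha> / real p ^ n\<rceil>))
            - real q ^ (d * (\<alpha> - nat \<lceil>real \<alpha> / real p ^ (n - 1)\<rceil>)))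
           / (real p ^ (n - 1) * (real p - 1))
    \<and> real (num_cyclic_subgroups (quot_units (P ^ \<alpha>)) (p ^ n)) =
           real q ^ (d * (\<alpha> - nat \<lceil>real \<alpha> / real p ^ (n - 1)\<rceil>))
            * (real q ^ (d * (nat \<lceil>real \<alpha> / real p ^ (n - 1)\<rceil>
                                     - nat \<lceil>real \<alpha> / real p ^ n\<rceil>)) - 1)
           / (real p ^ (n - 1) * (real p - 1))"
proof -
  note p = assms(1)
  have ch: "CHAR('a) = p" using char_eq[OF p] assms(2,3) by blast
  have p1: "p > 1" using p prime_gt_1_nat by blast
  define G where "G = quot_units (P ^ \<alpha>)"
  define N where "N = num_cyclic_subgroups G (p ^ n)"
  define c0 where "c0 = nat \<lceil>real \<alpha> / real p ^ n\<rceil>"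
  define c1 where "c1 = nat \<lceil>real \<alpha> / real p ^ (n - 1)\<rceil>"
  interpret G: group G unfolding G_def quot_units_def by (rule monoid.units_group[OF quot_monoid])
  have den: "real p ^ (n - 1) * (real p - 1) > 0" using p1 by simp
  have key: "real N = (real q ^ (d * (\<alpha> - c0)) - real q ^ (d * (\<alpha> - c1))) / (real p ^ (n - 1) * (real p - 1))"
  proof (cases "\<alpha> = 0")
    case True
    have car: "carrier G \<subseteq> {0}"
    proof
      fix x assume "x \<in> carrier G"
      then have "x mod 1 = x" using True
        by (auto simp: G_def quot_units_def units_of_carrier Units_def quot_poly_ring_def)
      then show "x \<in> {0}" by simp
    qed
    have emp: "{H. (\<exists>x\<in>carrier G. H = generate G {x}) \<and> card H = p ^ n} = {}"
    proof (intro equalityI subsetI)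
      fix H assume "H \<in> {H. (\<exists>x\<in>carrier G. H = generate G {x}) \<and> card H = p ^ n}"
      then obtain x where x: "x \<in> carrier G" "H = generate G {x}" "card H = p ^ n" by auto
      have "H \<subseteq> {0}" using G.generate_incl[of "{x}"] x car by auto
      then have "card H \<le> 1" using card_mono[of "{0}" H] by simp
      moreover have "p ^ n > 1" using p1 assms(7) by (metis one_less_power less_le_trans zero_less_one le_numeral_extra(4) One_nat_def Suc_le_eq)
      ultimately show "H \<in> {}" using x by simp
    qed simp
    have "N = 0" unfolding N_def num_cyclic_subgroups_def emp by simp
    then show ?thesis using True by (simp add: c0_def c1_def)
  next
    case False
    then have a1: "\<alpha> \<ge> 1" by simp
    have P0: "P \<noteq> 0" using assms(4) by auto
    define M where "M = P ^ \<alpha>"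
    have M0: "M \<noteq> 0" using P0 by (simp add: M_def)
    have fin: "finite (carrier G)"
    proof (rule finite_subset)
      show "carrier G \<subseteq> Bset (degree M)"
      proof
        fix x assume "x \<in> carrier G"
        then have "x mod M = x"
          by (auto simp: G_def M_def quot_units_def units_of_carrier Units_def quot_poly_ring_def)
        then show "x \<in> Bset (degree M)" using modiff[OF M0] Bset_iff by blast
      qed
      show "finite (Bset (degree M) :: 'a poly set)" using Bset_card by blast
    qed
    define X where "X j = {x \<in> carrier G. x [^]\<^bsub>G\<^esub> (p ^ j) = \<one>\<^bsub>G\<^esub>}" for j
    have cX: "card (X j) = q ^ (d * (\<alpha> - nat \<lceil>real \<alpha> / real p ^ j\<rceil>))" for j
      using count_X[OF p ch assms(4) a1, of j] assms(3,6) by (simp add: X_def G_def)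
    have Xo: "X j = {x \<in> carrier G. G.ord x dvd p ^ j}" for j
      unfolding X_def using G.pow_eq_id by blast
    have E: "{x \<in> carrier G. G.ord x = p ^ n} = X n - X (n - 1)"
      unfolding Xo using ord_primepow[OF p assms(7)] by blast
    have sub: "X (n - 1) \<subseteq> X n"
      unfolding Xo using le_imp_power_dvd[of "n - 1" n p] dvd_trans by auto
    have finX: "finite (X n)" using fin by (simp add: X_def)
    have "card {x \<in> carrier G. G.ord x = p ^ n} = totient (p ^ n) * N"
      unfolding N_def using G.count_cyclic[OF fin] p1 by simp
    moreover have "card {x \<in> carrier G. G.ord x = p ^ n} = card (X n) - card (X (n - 1))"
      unfolding E using card_Diff_subset[OF finite_subset[OF sub finX] sub] by simp
    moreover have "card (X (n - 1)) \<le> card (X n)" using card_mono[OF finX sub] .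
    moreover have "totient (p ^ n) = p ^ (n - 1) * (p - 1)" using totient_prime_power[OF p] assms(7) by simp
    ultimately have "real (p ^ (n - 1) * (p - 1)) * real N = real (card (X n)) - real (card (X (n - 1)))"
      by (metis of_nat_diff of_nat_mult)
    then have "real p ^ (n - 1) * (real p - 1) * real N = real q ^ (d * (\<alpha> - c0)) - real q ^ (d * (\<alpha> - c1))"
      using p1 by (simp add: cX c0_def c1_def of_nat_diff)
    moreover have "real N = (real p ^ (n - 1) * (real p - 1) * real N) / (real p ^ (n - 1) * (real p - 1))"
      by (rule nonzero_mult_div_cancel_left[symmetric]) (use den in linarith)
    ultimately show ?thesis by simp
  qed
  have pn: "real p ^ n > 0" "real p ^ (n - 1) > 0" using p1 by auto
  have "c0 \<le> c1"
  proof -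
    have "p ^ (n - 1) > 0" using p1 by simp
    then have "\<alpha> \<le> p ^ (n - 1) * c1" using ceil_le_iff_nat[of "p ^ (n - 1)" \<alpha> c1] by (simp add: c1_def)
    also have "\<dots> \<le> p ^ n * c1" using p1 by (intro mult_right_mono power_increasing) auto
    finally show ?thesis using ceil_le_iff_nat[of "p ^ n" \<alpha> c1] p1 by (simp add: c0_def)
  qed
  moreover have "c1 \<le> \<alpha>"
  proof -
    have "p ^ (n - 1) > 0" using p1 by simp
    then have e: "\<alpha> \<le> p ^ (n - 1) * \<alpha> \<longleftrightarrow> c1 \<le> \<alpha>"
      using ceil_le_iff_nat[of "p ^ (n - 1)" \<alpha> \<alpha>] unfolding c1_def of_nat_power by blast
    have "1 * \<alpha> \<le> p ^ (n - 1) * \<alpha>" by (rule mult_le_mono1) (use \<open>p ^ (n - 1) > 0\<close> in linarith)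
    then have "\<alpha> \<le> p ^ (n - 1) * \<alpha>" by simp
    then show ?thesis using e by blast
  qed
  ultimately have "d * (\<alpha> - c0) = d * (\<alpha> - c1) + d * (c1 - c0)" by (simp add: diff_mult_distrib2)
  then have "real q ^ (d * (\<alpha> - c0)) - real q ^ (d * (\<alpha> - c1))
      = real q ^ (d * (\<alpha> - c1)) * (real q ^ (d * (c1 - c0)) - 1)"
    by (simp add: power_add algebra_simps)
  then show ?thesis using key by (simp add: N_def G_def c0_def c1_def)
qed

end
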